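(* Let $Q\subset\mathbb{R}^d$, let $L(q,\dot q,S)$ be a smooth Lagrangian on $Q\times\mathbb{R}^d\times\mathbb{R}$ and $F^{fr}(q,\dot q,S)\in\mathbb{R}^d$ a smooth friction force. Assume the Legendre transform $(q,\dot q)\mapsto (q,p)$, $p=\frac{\partial L}{\partial \dot q}$, is a diffeomorphism, and define $H(q,p,S)=\langle p,\dot q\rangle - L(q,\dot q,S)$ (with $\dot q$ expressed in terms of $(q,p,S)$). Let $T=\frac{\partial H}{\partial S}$ and $K=-\langle F^{fr},\frac{\partial H}{\partial p}\rangle$, where $F^{fr}$ is evaluated at $(q,\frac{\partial H}{\partial p},S)$, and assume $T\neq 0$ and $K\neq 0$ along the motion. Define, for smooth functions $F,G,M,N$ of $(q,p,S)$, $$\{F,G\}=\Big\langle \frac{\partial F}{\partial q},\frac{\partial G}{\partial p}\Big\rangle-\Big\langle \frac{\partial F}{\partial p},\frac{\partial G}{\partial q}\Big\rangle,$$ $$(F,G;M,N)=\frac{1}{TK}\Big(\langle F^{fr},\tfrac{\partial F}{\partial p}\rangle\tfrac{\partial G}{\partial S}-\langle F^{fr},\tfrac{\partial G}{\partial p}\rangle\tfrac{\partial F}{\partial S}\Big)\Big(\langle F^{fr},\tfrac{\partial M}{\partial p}\rangle\tfrac{\partial N}{\partial S}-\langle F^{fr},\tfrac{\partial N}{\partial p}\rangle\tfrac{\partial M}{\partial S}\Big).$$ Then a curve $(q(t),S(t))\in Q\times\mathbb{R}$ is a solution of the variational problem for simple thermodynamic systems (see context) if and only if, after the change of variables $(q,\dot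 q,S)\mapsto(q,p,S)$, it is a metriplectic system with Poisson bracket $\{\cdot,\cdot\}$, 4-bracket $(\cdot,\cdot;\cdot,\cdot)$, Hamiltonian $H$ and entropy function $S$ (the coordinate function $(q,p,S)\mapsto S$), i.e. for every smooth function $F(q,p,S)$ one has $\frac{d}{dt}F(q(t),p(t),S(t))=\{F,H\}+(F,H;S,H)$ along the curve.
   Context: $\langle\cdot,\cdot\rangle$ is the standard dot product on $\mathbb{R}^d$. Variational problem for simple thermodynamic systems: find a curve $(q(t),S(t))\in Q\times\mathbb{R}$, $t\in[0,T_f]$, such that $\delta\int_0^{T_f}L(q,\dot q,S)\,dt=0$ for all variations $(\delta q,\delta S)$ with $\delta q$ vanishing at $t=0,T_f$ and subject to the variational constraint $\frac{\partial L}{\partial S}\delta S=\langle F^{fr}(q,\dot q,S),\delta q\rangle$, and such that the curve satisfies the phenomenological constraint $\frac{\partial L}{\partial S}\dot S=\langle F^{fr}(q,\dot q,S),\dot q\rangle$. (Solutions are exactly the curves satisfying $\frac{d}{dt}\frac{\partial L}{\partial\dot q}-\frac{\partial L}{\partial q}=F^{fr}$ and $\frac{\partial L}{\partial S}\dot S=\langle F^{fr},\dot q\rangle$.) Metriplectic system: given an antisymmetric bilinear bracket $\{\cdot,\cdot\}$ satisfying the Jacobi identity, a 4-bracket with $(F,G;M,N)=-(G,F;M,N)=-(F,G;N,M)=(M,N;F,G)$, a Hamiltonian $H$ and an entropy $S$ with $\{F,S\}=0$ for all $F$, the dynamics is metriplectic if $\dot F=\{F,H\}+(F,H;S,H)$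 for every function $F$ of the state. *)

theory Defs
  imports "HOL-Analysis.Analysis"
begin

coinductive smooth_on :: "'a::euclidean_space set \<Rightarrow> ('a \<Rightarrow> 'b::real_normed_vector) \<Rightarrow> bool"
  for U where
  "(\<forall>x\<in>U. f differentiable (at x within U)) \<Longrightarrow>
   (\<forall>i\<in>Basis. smooth_on U (\<lambda>x. frechet_derivative f (at x within U) i)) \<Longrightarrow>
   smooth_on U f"

type_synonym 'n state = "(real^'n) \<times> (real^'n) \<times> real"

text \<open>Partial gradients of a scalar function of (q, v, S) (resp. (q, p, S)).\<close>
definition grad1 :: "('n::finite state \<Rightarrow> real) \<Rightarrow> 'n state \<Rightarrow> real^'n" where
  "grad1 f z = (\<chi> i. frechet_derivative f (at z) (axis i 1, 0, 0))"

definition grad2 :: "('n::finite state \<Rightarrow> real) \<Rightarrow> 'n state \<Rightarrow> real^'n" where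
  "grad2 f z = (\<chi> i. frechet_derivative f (at z) (0, axis i 1, 0))"

definition dS :: "('n::finite state \<Rightarrow> real) \<Rightarrow> 'n state \<Rightarrow> real" where
  "dS f z = frechet_derivative f (at z) (0, 0, 1)"

definition Sfun :: "'n::finite state \<Rightarrow> real" where
  "Sfun z = snd (snd z)"

text \<open>Hamiltonian H(q,p,S) = <p, qdot> - L(q,qdot,S) with qdot = V(q,p,S) the inverse Legendre map.\<close>
definition Ham :: "('n::finite state \<Rightarrow> real) \<Rightarrow> ('n state \<Rightarrow> real^'n) \<Rightarrow> 'n state \<Rightarrow> real" where
  "Ham L V z = (case z of (q, p, S) \<Rightarrow> inner p (V z) - L (q, V z, S))"

definition Temp :: "('n::finite state \<Rightarrow> real) \<Rightarrow> ('n state \<Rightarrow> real^'n) \<Rightarrow> 'n state \<Rightarrow> real" where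
  "Temp L V z = dS (Ham L V) z"

definition Ffr_H :: "('n::finite state \<Rightarrow> real) \<Rightarrow> ('n state \<Rightarrow> real^'n) \<Rightarrow> ('n state \<Rightarrow> real^'n)
    \<Rightarrow> 'n state \<Rightarrow> real^'n" where
  "Ffr_H L V Ffr z = (case z of (q, p, S) \<Rightarrow> Ffr (q, grad2 (Ham L V) z, S))"

definition Kfun :: "('n::finite state \<Rightarrow> real) \<Rightarrow> ('n state \<Rightarrow> real^'n) \<Rightarrow> ('n state \<Rightarrow> real^'n)
    \<Rightarrow> 'n state \<Rightarrow> real" where
  "Kfun L V Ffr z = - inner (Ffr_H L V Ffr z) (grad2 (Ham L V) z)"

definition poisson :: "('n::finite state \<Rightarrow> real) \<Rightarrow> ('n state \<Rightarrow> real) \<Rightarrow> 'n state \<Rightarrow> real" where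
  "poisson F G z = inner (grad1 F z) (grad2 G z) - inner (grad2 F z) (grad1 G z)"

definition fourbr :: "('n::finite state \<Rightarrow> real) \<Rightarrow> ('n state \<Rightarrow> real^'n) \<Rightarrow> ('n state \<Rightarrow> real^'n)
    \<Rightarrow> ('n state \<Rightarrow> real) \<Rightarrow> ('n state \<Rightarrow> real) \<Rightarrow> ('n state \<Rightarrow> real) \<Rightarrow> ('n state \<Rightarrow> real)
    \<Rightarrow> 'n state \<Rightarrow> real" where
  "fourbr L V Ffr F G M N z =
     (let Fr = Ffr_H L V Ffr z in
      1 / (Temp L V z * Kfun L V Ffr z)
      * (inner Fr (grad2 F z) * dS G z - inner Fr (grad2 G z) * dS F z)
      * (inner Fr (grad2 M z) * dS N z - inner Fr (grad2 N z) * dS M z))"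

text \<open>Solution of the variational problem for simple thermodynamic systems on [0,Tf].
  The first variation is the derivative at eps = 0 of the action along the varied curve.\<close>
definition var_solution :: "('n::finite state \<Rightarrow> real) \<Rightarrow> ('n state \<Rightarrow> real^'n) \<Rightarrow> real
    \<Rightarrow> (real \<Rightarrow> real^'n) \<Rightarrow> (real \<Rightarrow> real) \<Rightarrow> bool" where
  "var_solution L Ffr Tf q S \<longleftrightarrow>
     (let qd = (\<lambda>t. vector_derivative q (at t within {0..Tf}));
          Sd = (\<lambda>t. vector_derivative S (at t within {0..Tf}))
      in (\<forall>\<delta>q \<delta>S. smooth_on {0..Tf} \<delta>q \<and> smooth_on {0..Tf} \<delta>S \<and> \<delta>q 0 = 0 \<and> \<delta>q Tf = 0 \<and>
            (\<forall>t\<in>{0..Tf}. dS L (q t, qd t, S t) * \<delta>S t = inner (Ffr (q t, qd t, S t)) (\<delta>q t))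
          \<longrightarrow> ((\<lambda>\<epsilon>. integral {0..Tf} (\<lambda>t. L (q t + \<epsilon> *\<^sub>R \<delta>q t,
                    qd t + \<epsilon> *\<^sub>R vector_derivative \<delta>q (at t within {0..Tf}),
                    S t + \<epsilon> * \<delta>S t))) has_real_derivative 0) (at 0))
       \<and> (\<forall>t\<in>{0..Tf}. dS L (q t, qd t, S t) * Sd t = inner (Ffr (q t, qd t, S t)) (qd t)))"

definition metriplectic :: "'n::finite state set \<Rightarrow> ('n state \<Rightarrow> real) \<Rightarrow> ('n state \<Rightarrow> real^'n)
    \<Rightarrow> ('n state \<Rightarrow> real^'n) \<Rightarrow> real \<Rightarrow> (real \<Rightarrow> real^'n) \<Rightarrow> (real \<Rightarrow> real^'n) \<Rightarrow> (real \<Rightarrow> real) \<Rightarrow> bool" where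
  "metriplectic D L V Ffr Tf q p S \<longleftrightarrow>
     (\<forall>F. smooth_on D F \<longrightarrow>
        (\<forall>t\<in>{0..Tf}. ((\<lambda>t. F (q t, p t, S t)) has_real_derivative
            (poisson F (Ham L V) (q t, p t, S t)
             + fourbr L V Ffr F (Ham L V) Sfun (Ham L V) (q t, p t, S t))) (at t within {0..Tf})))"

end

theory Submission
  imports Defs
begin


definition goodset :: "'a::euclidean_space set \<Rightarrow> bool" where
  "goodset U \<longleftrightarrow> (\<forall>x\<in>U. \<forall>i\<in>Basis. \<forall>e>0. \<exists>d. 0 < \<bar>d\<bar> \<and> \<bar>d\<bar> < e \<and> x + d *\<^sub>R i \<in> U)"

lemma goodset_open: "open U \<Longrightarrow> goodset U"
  unfolding goodset_def
proof (intro ballI allI impI)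
  fix x i and e :: real assume "open U" "x \<in> U" "i \<in> (Basis::'a set)" "e > 0"
  then obtain r where r: "r > 0" "ball x r \<subseteq> U" by (meson openE)
  define d where "d = min e r / 2"
  have "0 < \<bar>d\<bar>" "\<bar>d\<bar> < e" using r \<open>e>0\<close> by (auto simp: d_def)
  moreover have "x + d *\<^sub>R i \<in> ball x r" using r \<open>e>0\<close> \<open>i\<in>Basis\<close>
    by (auto simp: d_def dist_norm)
  ultimately show "\<exists>d. 0 < \<bar>d\<bar> \<and> \<bar>d\<bar> < e \<and> x + d *\<^sub>R i \<in> U" using r by blast
qed

lemma goodset_Icc: "(a::real) < b \<Longrightarrow> goodset {a..b}"
  unfolding goodset_def
proof (intro ballI allI impI)
  fix x i and e :: real assume ab: "a < b" "x \<in> {a..b}" "i \<in> (Basis::real set)" "e > 0"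
  then have i: "i = 1" by auto
  show "\<exists>d. 0 < \<bar>d\<bar> \<and> \<bar>d\<bar> < e \<and> x + d *\<^sub>R i \<in> {a..b}"
  proof (cases "x = b")
    case True
    define mm where "mm = min (b - a) e"
    have m: "mm \<le> b - a" "mm \<le> e" "mm > 0" using ab by (auto simp: mm_def)
    have "0 < \<bar>- mm / 2\<bar>" "\<bar>- mm / 2\<bar> < e" "x + (- mm / 2) *\<^sub>R i \<in> {a..b}"
      using m ab i True by auto
    then show ?thesis by blast
  next
    case False
    define mm where "mm = min (b - x) e"
    have m: "mm \<le> b - x" "mm \<le> e" "mm > 0" using ab False by (auto simp: mm_def)
    have "0 < \<bar>mm / 2\<bar>" "\<bar>mm / 2\<bar> < e" "x + (mm / 2) *\<^sub>R i \<in> {a..b}"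
      using m ab i False by auto
    then show ?thesis by blast
  qed
qed

lemma fd_unique:
  assumes "goodset U" "x \<in> U" "(f has_derivative f') (at x within U)"
  shows "frechet_derivative f (at x within U) = f'"
proof -
  have "f differentiable (at x within U)" using assms(3) by (auto simp: differentiable_def)
  then have "(f has_derivative frechet_derivative f (at x within U)) (at x within U)"
    by (rule frechet_derivative_works[THEN iffD1])
  then show ?thesis
    using assms unfolding goodset_def by (intro frechet_derivative_unique_within) auto
qed

fun Ck :: "nat \<Rightarrow> 'a::euclidean_space set \<Rightarrow> ('a \<Rightarrow> 'b::real_normed_vector) \<Rightarrow> bool" where
  "Ck 0 U f = (\<forall>x\<in>U. f differentiable (at x within U))"
| "Ck (Suc k) U f = ((\<forall>x\<in>U. f differentiable (at x within U)) \<and>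
      (\<forall>i\<in>Basis. Ck k U (\<lambda>x. frechet_derivative f (at x within U) i)))"

lemma smooth_Ck: "smooth_on U f \<Longrightarrow> Ck k U f"
proof (induction k arbitrary: f)
  case 0 then show ?case by (auto elim: smooth_on.cases)
next
  case (Suc k) then show ?case by (auto elim: smooth_on.cases)
qed

lemma Ck_smooth: assumes "\<And>k. Ck k U (f::'a::euclidean_space \<Rightarrow> 'b::real_normed_vector)" shows "smooth_on U f"
proof (rule smooth_on.coinduct[where X="\<lambda>f. \<forall>k. Ck k U f"])
  show "\<forall>k. Ck k U f" using assms by blast
next
  fix f assume smooth_on: "\<forall>k. Ck k U (f::'a \<Rightarrow> 'b)"
  have "\<forall>x\<in>U. f differentiable (at x within U)" using spec[OF smooth_on, of 0] by simp
  moreover have "\<forall>i\<in>Basis. \<forall>k. Ck k U (\<lambda>x. frechet_derivative f (at x within U) i)"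
    using smooth_on by (metis Ck.simps(2))
  ultimately show "\<exists>fa. f = fa \<and> (\<forall>x\<in>U. fa differentiable at x within U) \<and>
         (\<forall>i\<in>Basis. (\<forall>k. Ck k U (\<lambda>x. frechet_derivative fa (at x within U) i)) \<or>
             smooth_on U (\<lambda>x. frechet_derivative fa (at x within U) i))" by blast
qed

lemma smooth_iff_Ck: "smooth_on U f \<longleftrightarrow> (\<forall>k. Ck k U f)"
  using smooth_Ck Ck_smooth by blast

lemma Ck_diff: "Ck k U f \<Longrightarrow> x \<in> U \<Longrightarrow> f differentiable (at x within U)"
  by (cases k) auto

lemma Ck_mono: "Ck (Suc k) U f \<Longrightarrow> Ck k U f"
proof (induction k arbitrary: f)
  case 0 then show ?case by simp
next
  case (Suc k) then show ?case by (metis Ck.simps(2))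
qed

lemma Ck_mono_add: "Ck (m + d) U f \<Longrightarrow> Ck m U f"
proof (induction d)
  case 0 then show ?case by simp
next
  case (Suc d)
  have "Ck (Suc (m + d)) U f" using Suc.prems by (simp only: add_Suc_right)
  then show ?case using Suc.IH Ck_mono by blast
qed

lemma Ck_mono_le: "Ck k U f \<Longrightarrow> m \<le> k \<Longrightarrow> Ck m U f"
  by (metis Ck_mono_add le_add_diff_inverse)

lemma Ck_D: "Ck (Suc k) U f \<Longrightarrow> i \<in> Basis \<Longrightarrow> Ck k U (\<lambda>x. frechet_derivative f (at x within U) i)"
  by simp

lemma fd_cong:
  assumes "x \<in> U" "\<And>y. y \<in> U \<Longrightarrow> f y = g y"
  shows "frechet_derivative f (at x within U) = frechet_derivative g (at x within U)"
proof -
  have "\<And>f'. (f has_derivative f') (at x within U) \<longleftrightarrow> (g has_derivative f') (at x within U)"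
    using assms by (metis has_derivative_transform)
  then show ?thesis unfolding frechet_derivative_def by simp
qed

lemma Ck_cong: "Ck k U f \<Longrightarrow> (\<And>x. x \<in> U \<Longrightarrow> f x = g x) \<Longrightarrow> Ck k U g"
proof (induction k arbitrary: f g)
  case 0
  then show ?case
    unfolding Ck.simps differentiable_def by (metis has_derivative_transform)
next
  case (Suc k)
  have d: "\<forall>x\<in>U. g differentiable (at x within U)"
    using Suc.prems unfolding Ck.simps differentiable_def by (metis has_derivative_transform)
  show ?case
  proof (simp only: Ck.simps, intro conjI d ballI)
    fix i :: 'a assume i: "i \<in> Basis"
    show "Ck k U (\<lambda>x. frechet_derivative g (at x within U) i)"
      using Suc.IH[of "\<lambda>x. frechet_derivative f (at x within U) i"] Suc.prems i fd_cong[of _ U f g]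
      by simp
  qed
qed

lemma CkI:
  assumes "goodset U"
    and "\<And>x. x \<in> U \<Longrightarrow> (h has_derivative h' x) (at x within U)"
    and "\<And>i. i \<in> Basis \<Longrightarrow> Ck k U (\<lambda>x. h' x i)"
  shows "Ck (Suc k) U h"
proof (simp only: Ck.simps, intro conjI ballI)
  fix x assume "x \<in> U" then show "h differentiable (at x within U)"
    using assms(2) by (auto simp: differentiable_def)
next
  fix i :: 'a assume i: "i \<in> Basis"
  show "Ck k U (\<lambda>x. frechet_derivative h (at x within U) i)"
    using assms(3)[OF i] by (rule Ck_cong) (simp add: fd_unique[OF assms(1) _ assms(2)])
qed

lemma Ck0I: "(\<And>x. x \<in> U \<Longrightarrow> (h has_derivative h' x) (at x within U)) \<Longrightarrow> Ck 0 U h"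
  by (auto simp: differentiable_def)

lemma diff_hasD: "f differentiable (at x within U) \<Longrightarrow> (f has_derivative frechet_derivative f (at x within U)) (at x within U)"
  using frechet_derivative_works by blast

lemma Ck_hasD:
  assumes "Ck k U f" "x \<in> U"
  shows "(f has_derivative frechet_derivative f (at x within U)) (at x within U)"
  using Ck_diff[OF assms] frechet_derivative_works by blast

lemma Ck_const: "goodset U \<Longrightarrow> Ck k U (\<lambda>x. c)"
proof (induction k arbitrary: c)
  case 0 then show ?case by (auto intro: Ck0I)
next
  case (Suc k)
  show ?case by (rule CkI[where h'="\<lambda>x h. 0"]) (auto simp: Suc)
qed

lemma Ck_linear: "goodset U \<Longrightarrow> bounded_linear l \<Longrightarrow> Ck k U f \<Longrightarrow> Ck k U (\<lambda>x. l (f x))"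
proof (induction k arbitrary: f)
  case 0 then show ?case
    by (intro Ck0I[where h'="\<lambda>x h. l (frechet_derivative f (at x within U) h)"])
      (rule bounded_linear.has_derivative[OF _ diff_hasD], auto)
next
  case (Suc k)
  show ?case
  proof (rule CkI[where h'="\<lambda>x h. l (frechet_derivative f (at x within U) h)"])
    fix x assume "x \<in> U"
    then show "((\<lambda>x. l (f x)) has_derivative (\<lambda>h. l (frechet_derivative f (at x within U) h))) (at x within U)"
      using Suc.prems by (intro bounded_linear.has_derivative[OF _ Ck_hasD[OF Suc.prems(3)]]) auto
  next
    fix i :: 'a assume "i \<in> Basis"
    then show "Ck k U (\<lambda>x. l (frechet_derivative f (at x within U) i))"
      using Suc by auto
  qed (use Suc in auto)
qed

lemma Ck_id: "goodset U \<Longrightarrow> Ck k U (\<lambda>x. x)"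
proof (induction k)
  case 0 then show ?case by (auto intro!: Ck0I derivative_eq_intros)
next
  case (Suc k)
  show ?case by (rule CkI[where h'="\<lambda>x h. h"]) (auto intro!: derivative_eq_intros Ck_const Suc)
qed

lemma Ck_add: "goodset U \<Longrightarrow> Ck k U f \<Longrightarrow> Ck k U g \<Longrightarrow> Ck k U (\<lambda>x. f x + g x)"
proof (induction k arbitrary: f g)
  case 0 then show ?case
    by (intro Ck0I[where h'="\<lambda>x h. frechet_derivative f (at x within U) h + frechet_derivative g (at x within U) h"] has_derivative_add diff_hasD) auto
next
  case (Suc k)
  show ?case
  proof (rule CkI[where h'="\<lambda>x h. frechet_derivative f (at x within U) h + frechet_derivative g (at x within U) h"])
    fix x assume "x \<in> U"
    then show "((\<lambda>x. f x + g x) has_derivative (\<lambda>h. frechet_derivative f (at x within U) h + frechet_derivative g (at x within U) h)) (at x within U)"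
      using Suc.prems by (intro has_derivative_add Ck_hasD[OF Suc.prems(2)] Ck_hasD[OF Suc.prems(3)])
  qed (use Suc in auto)
qed

lemma Ck_sum: "goodset U \<Longrightarrow> (\<And>j. j \<in> A \<Longrightarrow> Ck k U (f j)) \<Longrightarrow> Ck k U (\<lambda>x. \<Sum>j\<in>A. f j x)"
proof (induction A rule: infinite_finite_induct)
  case (infinite A) then show ?case by (simp add: Ck_const)
next
  case empty then show ?case by (simp add: Ck_const)
next
  case (insert a A) then show ?case by (simp add: Ck_add)
qed

lemma Ck_bilinear:
  assumes "goodset U" "bounded_bilinear bl"
  shows "Ck k U f \<Longrightarrow> Ck k U g \<Longrightarrow> Ck k U (\<lambda>x. bl (f x) (g x))"
proof (induction k arbitrary: f g)
  case 0 then show ?case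
    by (intro Ck0I[where h'="\<lambda>x h. bl (f x) (frechet_derivative g (at x within U) h) + bl (frechet_derivative f (at x within U) h) (g x)"] bounded_bilinear.FDERIV[OF assms(2)] diff_hasD) auto
next
  case (Suc k)
  show ?case
  proof (rule CkI[where h'="\<lambda>x h. bl (f x) (frechet_derivative g (at x within U) h) + bl (frechet_derivative f (at x within U) h) (g x)"])
    fix x assume "x \<in> U"
    then show "((\<lambda>x. bl (f x) (g x)) has_derivative (\<lambda>h. bl (f x) (frechet_derivative g (at x within U) h) + bl (frechet_derivative f (at x within U) h) (g x))) (at x within U)"
      using Suc.prems by (intro bounded_bilinear.FDERIV[OF assms(2)] Ck_hasD[OF Suc.prems(1)] Ck_hasD[OF Suc.prems(2)])
  next
    fix i :: 'a assume i: "i \<in> Basis"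
    have f: "Ck k U f" and g: "Ck k U g" using Suc.prems Ck_mono by blast+
    show "Ck k U (\<lambda>x. bl (f x) (frechet_derivative g (at x within U) i) + bl (frechet_derivative f (at x within U) i) (g x))"
      using Suc.IH[OF f Ck_D[OF Suc.prems(2) i]] Suc.IH[OF Ck_D[OF Suc.prems(1) i] g]
      by (intro Ck_add assms(1))
  qed (use assms in auto)
qed

lemma Ck_scaleR: "goodset U \<Longrightarrow> Ck k U a \<Longrightarrow> Ck k U f \<Longrightarrow> Ck k U (\<lambda>x. a x *\<^sub>R f x)"
  by (rule Ck_bilinear[OF _ bounded_bilinear_scaleR])
lemma Ck_mult: "goodset U \<Longrightarrow> Ck k U (a::_\<Rightarrow>real) \<Longrightarrow> Ck k U b \<Longrightarrow> Ck k U (\<lambda>x. a x * b x)"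
  by (rule Ck_bilinear[OF _ bounded_bilinear_mult])
lemma Ck_inner: "goodset U \<Longrightarrow> Ck k U a \<Longrightarrow> Ck k U b \<Longrightarrow> Ck k U (\<lambda>x. inner (a x) (b x))"
  by (rule Ck_bilinear[OF _ bounded_bilinear_inner])

lemma Ck_inverse:
  assumes "goodset U"
  shows "Ck k U (a::_\<Rightarrow>real) \<Longrightarrow> (\<And>x. x \<in> U \<Longrightarrow> a x \<noteq> 0) \<Longrightarrow> Ck k U (\<lambda>x. inverse (a x))"
proof (induction k arbitrary: a)
  case 0
  show ?case
  proof (rule Ck0I[where h'="\<lambda>x h. - (inverse (a x) * frechet_derivative a (at x within U) h * inverse (a x))"])
    fix x assume x: "x \<in> U"
    have ad: "(a has_derivative frechet_derivative a (at x within U)) (at x within U)"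
      using 0 x by (intro diff_hasD) auto
    then show "((\<lambda>x. inverse (a x)) has_derivative (\<lambda>h. - (inverse (a x) * frechet_derivative a (at x within U) h * inverse (a x)))) (at x within U)"
      using 0 x by (intro Deriv.has_derivative_inverse[OF _ ad]) auto
  qed
next
  case (Suc k)
  show ?case
  proof (rule CkI[where h'="\<lambda>x h. - (inverse (a x) * frechet_derivative a (at x within U) h * inverse (a x))"])
    fix x assume x: "x \<in> U"
    show "((\<lambda>x. inverse (a x)) has_derivative (\<lambda>h. - (inverse (a x) * frechet_derivative a (at x within U) h * inverse (a x)))) (at x within U)"
      using Suc.prems(2)[OF x] by (rule Deriv.has_derivative_inverse[OF _ Ck_hasD[OF Suc.prems(1) x]])
  next
    fix i :: 'a assume i: "i \<in> Basis"
    have ia: "Ck k U (\<lambda>x. inverse (a x))" using Suc.IH[OF Ck_mono[OF Suc.prems(1)]] Suc.prems(2) by blast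
    have "Ck k U (\<lambda>x. - 1 * (inverse (a x) * frechet_derivative a (at x within U) i * inverse (a x)))"
      by (intro Ck_mult assms ia Ck_D[OF Suc.prems(1) i] Ck_const)
    then show "Ck k U (\<lambda>x. - (inverse (a x) * frechet_derivative a (at x within U) i * inverse (a x)))"
      by simp
  qed (use assms in auto)
qed

lemma linear_basis_expand:
  assumes "linear l"
  shows "l v = (\<Sum>j\<in>Basis. (v \<bullet> j) *\<^sub>R l j)"
proof -
  have "l v = l (\<Sum>j\<in>Basis. (v \<bullet> j) *\<^sub>R j)" by (simp add: euclidean_representation)
  also have "\<dots> = (\<Sum>j\<in>Basis. (v \<bullet> j) *\<^sub>R l j)"
    by (simp add: linear_sum[OF assms] linear_scale[OF assms])
  finally show ?thesis .
qed

lemma Ck_comp: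
  assumes "open V" "goodset U"
  shows "Ck k V f \<Longrightarrow> Ck k U g \<Longrightarrow> (\<And>x. x \<in> U \<Longrightarrow> g x \<in> V) \<Longrightarrow> Ck k U (\<lambda>x. f (g x))"
proof (induction k arbitrary: f)
  case 0
  show ?case
  proof (rule Ck0I)
    fix x assume x: "x \<in> U"
    have df: "(f has_derivative frechet_derivative f (at (g x) within V)) (at (g x))"
      using Ck_hasD[OF 0(1) 0(3)[OF x]] at_within_open[OF 0(3)[OF x] assms(1)] by simp
    show "((\<lambda>x. f (g x)) has_derivative (\<lambda>h. frechet_derivative f (at (g x) within V) (frechet_derivative g (at x within U) h))) (at x within U)"
      by (rule has_derivative_compose[OF Ck_hasD[OF 0(2) x] df])
  qed
next
  case (Suc k)
  let ?Df = "\<lambda>y. frechet_derivative f (at y within V)"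
  let ?Dg = "\<lambda>x. frechet_derivative g (at x within U)"
  show ?case
  proof (rule CkI[where h'="\<lambda>x h. (\<Sum>j\<in>Basis. (?Dg x h \<bullet> j) *\<^sub>R ?Df (g x) j)"])
    fix x assume x: "x \<in> U"
    have df: "(f has_derivative ?Df (g x)) (at (g x))"
      using Ck_hasD[OF Suc.prems(1) Suc.prems(3)[OF x]] at_within_open[OF Suc.prems(3)[OF x] assms(1)] by simp
    have lin: "linear (?Df (g x))" using df has_derivative_linear by blast
    have "((\<lambda>x. f (g x)) has_derivative (\<lambda>h. ?Df (g x) (?Dg x h))) (at x within U)"
      by (rule has_derivative_compose[OF Ck_hasD[OF Suc.prems(2) x] df])
    moreover have "(\<lambda>h. ?Df (g x) (?Dg x h)) = (\<lambda>h. (\<Sum>j\<in>Basis. (?Dg x h \<bullet> j) *\<^sub>R ?Df (g x) j))"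
      by (rule ext) (rule linear_basis_expand[OF lin])
    ultimately show "((\<lambda>x. f (g x)) has_derivative (\<lambda>h. (\<Sum>j\<in>Basis. (?Dg x h \<bullet> j) *\<^sub>R ?Df (g x) j))) (at x within U)"
      by simp
  next
    fix i :: 'b assume i: "i \<in> Basis"
    have g: "Ck k U g" using Suc.prems(2) Ck_mono by blast
    show "Ck k U (\<lambda>x. \<Sum>j\<in>Basis. (?Dg x i \<bullet> j) *\<^sub>R ?Df (g x) j)"
    proof (intro Ck_sum Ck_scaleR assms)
      fix j :: 'a assume j: "j \<in> Basis"
      show "Ck k U (\<lambda>x. ?Dg x i \<bullet> j)"
        using Ck_linear[OF assms(2) bounded_linear_inner_left Ck_D[OF Suc.prems(2) i]] .
      show "Ck k U (\<lambda>x. ?Df (g x) j)"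
        using Suc.IH[OF Ck_D[OF Suc.prems(1) j] g Suc.prems(3)] .
    qed
  qed (use assms in auto)
qed



lemma vec_as_sum: "(\<chi> i. c i) = (\<Sum>i\<in>UNIV. c i *\<^sub>R axis i (1::real))"
  by (metis (no_types, lifting) basis_expansion scalar_mult_eq_scaleR sum.cong vec_lambda_beta)

lemma lin_decomp:
  fixes l :: "'n::finite state \<Rightarrow> real"
  assumes "linear l"
  shows "l (a, b, c) = inner (\<chi> i. l (axis i 1, 0, 0)) a + inner (\<chi> i. l (0, axis i 1, 0)) b + l (0, 0, 1) * c"
proof -
  have A: "(\<Sum>i\<in>UNIV. (a $ i) *\<^sub>R (axis i 1, 0::real^'n, 0::real)) = (a, 0, 0)"
  proof -
    have "(\<Sum>i\<in>UNIV. (a $ i) *\<^sub>R (axis i 1, 0::real^'n, 0::real)) = ((\<Sum>i\<in>UNIV. (a $ i) *\<^sub>R axis i 1), 0, 0)"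
      by (induction rule: infinite_finite_induct) (auto simp: zero_prod_def)
    also have "\<dots> = (a, 0, 0)" using basis_expansion[of a] by (simp add: scalar_mult_eq_scaleR)
    finally show ?thesis .
  qed
  have B: "(\<Sum>i\<in>UNIV. (b $ i) *\<^sub>R (0::real^'n, axis i 1, 0::real)) = (0, b, 0)"
  proof -
    have "(\<Sum>i\<in>UNIV. (b $ i) *\<^sub>R (0::real^'n, axis i 1, 0::real)) = (0, (\<Sum>i\<in>UNIV. (b $ i) *\<^sub>R axis i 1), 0)"
      by (induction rule: infinite_finite_induct) (auto simp: zero_prod_def)
    also have "\<dots> = (0, b, 0)" using basis_expansion[of b] by (simp add: scalar_mult_eq_scaleR)
    finally show ?thesis .
  qed
  have e: "(a, b, c) = (\<Sum>i\<in>UNIV. (a $ i) *\<^sub>R (axis i 1, 0, 0)) + (\<Sum>i\<in>UNIV. (b $ i) *\<^sub>R (0, axis i 1, 0)) + c *\<^sub>R (0, 0, 1)"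
    unfolding A B by simp
  have "l (a, b, c) = (\<Sum>i\<in>UNIV. (a $ i) * l (axis i 1, 0, 0)) + (\<Sum>i\<in>UNIV. (b $ i) * l (0, axis i 1, 0)) + c * l (0, 0, 1)"
    by (subst e, simp only: linear_add[OF assms] linear_sum[OF assms] linear_scale[OF assms]) simp
  then show ?thesis by (simp add: inner_vec_def mult.commute)
qed

lemma fd_decomp:
  fixes f :: "'n::finite state \<Rightarrow> real"
  assumes "f differentiable (at z)"
  shows "frechet_derivative f (at z) (a, b, c) = inner (grad1 f z) a + inner (grad2 f z) b + dS f z * c"
proof -
  have "linear (frechet_derivative f (at z))"
    using assms frechet_derivative_works has_derivative_linear by blast
  then show ?thesis unfolding grad1_def grad2_def dS_def by (rule lin_decomp)
qed

lemma has_derivative_state: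
  fixes f :: "'n::finite state \<Rightarrow> real"
  assumes "f differentiable (at z)"
  shows "(f has_derivative (\<lambda>(a, b, c). inner (grad1 f z) a + inner (grad2 f z) b + dS f z * c)) (at z)"
proof -
  have "(f has_derivative frechet_derivative f (at z)) (at z)"
    using assms frechet_derivative_works by blast
  moreover have "frechet_derivative f (at z) = (\<lambda>(a, b, c). inner (grad1 f z) a + inner (grad2 f z) b + dS f z * c)"
    by (rule ext) (auto simp: fd_decomp[OF assms])
  ultimately show ?thesis by simp
qed

lemma grads_from_derivative:
  fixes f :: "'n::finite state \<Rightarrow> real"
  assumes "(f has_derivative (\<lambda>(a, b, c). inner g1 a + inner g2 b + g3 * c)) (at z)"
  shows "grad1 f z = g1" "grad2 f z = g2" "dS f z = g3"
proof -
  have fd: "frechet_derivative f (at z) = (\<lambda>(a, b, c). inner g1 a + inner g2 b + g3 * c)"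
    using frechet_derivative_at[OF assms] by simp
  show "grad1 f z = g1" unfolding grad1_def fd by (simp add: vec_eq_iff inner_axis)
  show "grad2 f z = g2" unfolding grad2_def fd by (simp add: vec_eq_iff inner_axis)
  show "dS f z = g3" unfolding dS_def fd by simp
qed

lemma Basis_state1: "((axis i 1, 0, 0) :: 'n::finite state) \<in> Basis"
  unfolding Basis_prod_def
  by (rule UnI1, rule image_eqI[where x="axis i 1"]) (auto simp: zero_prod_def)

lemma Basis_state2: "((0, axis i 1, 0) :: 'n::finite state) \<in> Basis"
  unfolding Basis_prod_def
  by (rule UnI2, rule image_eqI[where x="(axis i 1, 0)"]) (auto simp: Basis_prod_def)

lemma Basis_state3: "((0, 0, 1) :: 'n::finite state) \<in> Basis"
  unfolding Basis_prod_def
  by (rule UnI2, rule image_eqI[where x="(0, 1)"]) (auto simp: Basis_prod_def)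

lemmas Basis_state = Basis_state1 Basis_state2 Basis_state3

lemma Ck_dS:
  fixes f :: "'n::finite state \<Rightarrow> real"
  assumes "open D" "Ck (Suc k) D f"
  shows "Ck k D (dS f)"
proof -
  have "Ck k D (\<lambda>z. frechet_derivative f (at z within D) (0, 0, 1))"
    using Ck_D[OF assms(2) Basis_state(3)] .
  then show ?thesis
    by (rule Ck_cong) (simp add: dS_def at_within_open[OF _ assms(1)])
qed

lemma Ck_grad2:
  fixes f :: "'n::finite state \<Rightarrow> real"
  assumes "open D" "Ck (Suc k) D f"
  shows "Ck k D (grad2 f)"
proof -
  have g: "goodset D" using assms(1) goodset_open by blast
  have "Ck k D (\<lambda>z. \<Sum>i\<in>UNIV. frechet_derivative f (at z within D) (0, axis i 1, 0) *\<^sub>R axis i (1::real))"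
    using assms(2) Basis_state by (intro Ck_sum Ck_scaleR g Ck_const) auto
  then show ?thesis
    by (rule Ck_cong) (simp add: grad2_def at_within_open[OF _ assms(1)] vec_as_sum)
qed

lemma Ck_grad1:
  fixes f :: "'n::finite state \<Rightarrow> real"
  assumes "open D" "Ck (Suc k) D f"
  shows "Ck k D (grad1 f)"
proof -
  have g: "goodset D" using assms(1) goodset_open by blast
  have "Ck k D (\<lambda>z. \<Sum>i\<in>UNIV. frechet_derivative f (at z within D) (axis i 1, 0, 0) *\<^sub>R axis i (1::real))"
    using assms(2) Basis_state by (intro Ck_sum Ck_scaleR g Ck_const) auto
  then show ?thesis
    by (rule Ck_cong) (simp add: grad1_def at_within_open[OF _ assms(1)] vec_as_sum)
qed

lemma Ck_pair: "goodset U \<Longrightarrow> Ck k U f \<Longrightarrow> Ck k U g \<Longrightarrow> Ck k U (\<lambda>x. (f x, g x))"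
proof -
  assume u: "goodset U" and f: "Ck k U f" and g: "Ck k U g"
  have "Ck k U (\<lambda>x. (f x, 0) + (0, g x))"
    by (intro Ck_add u Ck_linear[OF u _ f] Ck_linear[OF u _ g])
      (auto intro: bounded_linear_Pair bounded_linear_ident bounded_linear_zero)
  then show ?thesis by simp
qed

lemma Ck_cont: "Ck k U f \<Longrightarrow> continuous_on U f"
  by (metis Ck_diff continuous_on_eq_continuous_within differentiable_imp_continuous_within)

lemma curve_vd:
  fixes h :: "real \<Rightarrow> 'b::euclidean_space"
  assumes ab: "a < b" and h: "Ck (Suc k) {a..b} h"
  shows "Ck k {a..b} (\<lambda>t. vector_derivative h (at t within {a..b}))"
    and "\<And>t. t \<in> {a..b} \<Longrightarrow> (h has_vector_derivative vector_derivative h (at t within {a..b})) (at t within {a..b})"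
proof -
  have vd: "(h has_vector_derivative frechet_derivative h (at t within {a..b}) 1) (at t within {a..b})"
    and eq: "vector_derivative h (at t within {a..b}) = frechet_derivative h (at t within {a..b}) 1"
    if t: "t \<in> {a..b}" for t
  proof -
    have d: "(h has_derivative frechet_derivative h (at t within {a..b})) (at t within {a..b})"
      using Ck_hasD[OF h t] .
    have lin: "linear (frechet_derivative h (at t within {a..b}))" using d has_derivative_linear by blast
    have "frechet_derivative h (at t within {a..b}) = (\<lambda>x. x *\<^sub>R frechet_derivative h (at t within {a..b}) 1)"
      by (rule ext) (metis lin linear_scale mult.right_neutral real_scaleR_def)
    then show "(h has_vector_derivative frechet_derivative h (at t within {a..b}) 1) (at t within {a..b})"
      using d unfolding has_vector_derivative_def by simp
    then show "vector_derivative h (at t within {a..b}) = frechet_derivative h (at t within {a..b}) 1"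
      using vector_derivative_within_closed_interval[OF ab t] by blast
  qed
  show "Ck k {a..b} (\<lambda>t. vector_derivative h (at t within {a..b}))"
    using Ck_D[OF h, of 1] by (rule Ck_cong) (auto simp: eq)
  show "\<And>t. t \<in> {a..b} \<Longrightarrow> (h has_vector_derivative vector_derivative h (at t within {a..b})) (at t within {a..b})"
    using vd eq by simp
qed



lemma Ham_eq: "Ham L V = (\<lambda>z. inner (fst (snd z)) (V z) - L (fst z, V z, snd (snd z)))"
  by (rule ext) (auto simp: Ham_def split: prod.splits)

lemma Ham_derivs:
  fixes L :: "'n::finite state \<Rightarrow> real" and V :: "'n state \<Rightarrow> real^'n"
  assumes Vd: "V differentiable (at (x, p, s))"
    and Ld: "L differentiable (at (x, V (x, p, s), s))"
    and Vr: "grad2 L (x, V (x, p, s), s) = p"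
  shows "grad1 (Ham L V) (x, p, s) = - grad1 L (x, V (x, p, s), s)"
    and "grad2 (Ham L V) (x, p, s) = V (x, p, s)"
    and "dS (Ham L V) (x, p, s) = - dS L (x, V (x, p, s), s)"
proof -
  let ?z = "(x, p, s)"
  let ?w = "(x, V ?z, s)"
  let ?V' = "frechet_derivative V (at ?z)"
  have dV: "(V has_derivative ?V') (at ?z)" using Vd frechet_derivative_works by blast
  have dL: "(L has_derivative (\<lambda>(a, b, c). inner (grad1 L ?w) a + inner (grad2 L ?w) b + dS L ?w * c)) (at ?w)"
    using has_derivative_state[OF Ld] .
  have dW: "((\<lambda>z. (fst z, V z, snd (snd z))) has_derivative (\<lambda>h. (fst h, ?V' h, snd (snd h)))) (at ?z)"
    by (intro derivative_eq_intros) (auto intro: dV)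
  have dLW: "((\<lambda>z. L (fst z, V z, snd (snd z))) has_derivative
      (\<lambda>h. inner (grad1 L ?w) (fst h) + inner p (?V' h) + dS L ?w * snd (snd h))) (at ?z)"
    using has_derivative_compose[OF dW, of L, simplified, OF dL[unfolded Vr]] by (simp add: split_beta)
  have dI: "((\<lambda>z. inner (fst (snd z)) (V z)) has_derivative
      (\<lambda>h. inner (fst (snd z')) (?V' h) + inner (fst (snd h)) (V z'))) (at ?z)" if "z' = ?z" for z'
    using that by (intro derivative_eq_intros) (auto intro: dV)
  have "(Ham L V has_derivative
      (\<lambda>(a, b, c). inner (- grad1 L ?w) a + inner (V ?z) b + (- dS L ?w) * c)) (at ?z)"
    unfolding Ham_eq
    by (rule has_derivative_eq_rhs[OF has_derivative_diff[OF dI[OF refl] dLW]])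
      (auto simp: fun_eq_iff inner_commute split: prod.splits)
  from grads_from_derivative[OF this]
  show "grad1 (Ham L V) ?z = - grad1 L ?w" "grad2 (Ham L V) ?z = V ?z" "dS (Ham L V) ?z = - dS L ?w"
    by auto
qed



lemma action_deriv:
  fixes L :: "'n::finite state \<Rightarrow> real"
    and q qd dq dqd :: "real \<Rightarrow> real^'n" and S dSv :: "real \<Rightarrow> real"
  assumes Q: "open Q" and Tf: "0 < Tf"
    and L: "Ck (Suc 0) (Q \<times> UNIV \<times> UNIV) L"
    and cq: "continuous_on {0..Tf} q" and cqd: "continuous_on {0..Tf} qd"
    and cS: "continuous_on {0..Tf} S" and cdq: "continuous_on {0..Tf} dq"
    and cdqd: "continuous_on {0..Tf} dqd" and cdS: "continuous_on {0..Tf} dSv"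
    and qQ: "\<And>t. t \<in> {0..Tf} \<Longrightarrow> q t \<in> Q"
  shows "((\<lambda>\<epsilon>. integral {0..Tf} (\<lambda>t. L (q t + \<epsilon> *\<^sub>R dq t, qd t + \<epsilon> *\<^sub>R dqd t, S t + \<epsilon> * dSv t)))
    has_real_derivative
     integral {0..Tf} (\<lambda>t. inner (grad1 L (q t, qd t, S t)) (dq t) + inner (grad2 L (q t, qd t, S t)) (dqd t)
        + dS L (q t, qd t, S t) * dSv t)) (at 0)"
proof -
  define D where "D = Q \<times> (UNIV :: (real^'n) set) \<times> (UNIV :: real set)"
  have oD: "open D" unfolding D_def using Q by (intro open_Times) auto
  define I where "I = {0..Tf}"
  have I: "I = cbox 0 Tf" unfolding I_def by simp
  have "compact (q ` I)" unfolding I_def using cq by (intro compact_continuous_image) auto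
  moreover have "q ` I \<subseteq> Q" using qQ I_def by auto
  ultimately obtain e where e: "e > 0" "(\<Union>x\<in>q ` I. ball x e) \<subseteq> Q"
    using compact_subset_open_imp_ball_epsilon_subset[OF _ Q] by metis
  have "compact (dq ` I)" unfolding I_def using cdq by (intro compact_continuous_image) auto
  then obtain B where B: "B > 0" "\<And>t. t \<in> I \<Longrightarrow> norm (dq t) \<le> B"
    using compact_imp_bounded bounded_pos by (metis image_eqI)
  define U where "U = ball (0::real) (e / B)"
  have oU: "open U" and cU: "convex U" and U0: "0 \<in> U" unfolding U_def using e B by auto
  define W where "W = (\<lambda>\<epsilon> t. (q t + \<epsilon> *\<^sub>R dq t, qd t + \<epsilon> *\<^sub>R dqd t, S t + \<epsilon> * dSv t))"
  have WD: "W \<epsilon> t \<in> D" if "\<epsilon> \<in> U" "t \<in> I" for \<epsilon> t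
  proof -
    have "norm (\<epsilon> *\<^sub>R dq t) = \<bar>\<epsilon>\<bar> * norm (dq t)" by simp
    also have "\<dots> \<le> \<bar>\<epsilon>\<bar> * B" using B that by (simp add: mult_left_mono)
    also have "\<dots> < (e / B) * B" using that B unfolding U_def by (intro mult_strict_right_mono) auto
    also have "\<dots> = e" using B by simp
    finally have "q t + \<epsilon> *\<^sub>R dq t \<in> ball (q t) e" by (simp add: dist_norm)
    then have "q t + \<epsilon> *\<^sub>R dq t \<in> Q" using e that by blast
    then show ?thesis unfolding W_def D_def by simp
  qed
  have Ld: "L differentiable (at z)" if "z \<in> D" for z
    using Ck_diff[OF L that[unfolded D_def]] at_within_open[OF that[unfolded D_def] oD[unfolded D_def]] by simp
  have g1: "continuous_on D (grad1 L)" using Ck_cont[OF Ck_grad1[OF oD L[folded D_def]]] .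
  have g2: "continuous_on D (grad2 L)" using Ck_cont[OF Ck_grad2[OF oD L[folded D_def]]] .
  have g3: "continuous_on D (dS L)" using Ck_cont[OF Ck_dS[OF oD L[folded D_def]]] .
  have Lc: "continuous_on D L" using Ck_cont[OF L] D_def by simp
  define fx where "fx = (\<lambda>\<epsilon> t. inner (grad1 L (W \<epsilon> t)) (dq t) + inner (grad2 L (W \<epsilon> t)) (dqd t) + dS L (W \<epsilon> t) * dSv t)"
  have cW: "continuous_on (U \<times> I) (\<lambda>(\<epsilon>, t). W \<epsilon> t)"
    unfolding W_def split_beta I_def
    by (intro continuous_intros continuous_on_compose2[OF cq] continuous_on_compose2[OF cqd]
        continuous_on_compose2[OF cS] continuous_on_compose2[OF cdq] continuous_on_compose2[OF cdqd]
        continuous_on_compose2[OF cdS]) auto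
  have WD': "(\<lambda>(\<epsilon>, t). W \<epsilon> t) ` (U \<times> I) \<subseteq> D" using WD by auto
  have cfx: "continuous_on (U \<times> I) (\<lambda>(\<epsilon>, t). fx \<epsilon> t)"
  proof -
    have c1: "continuous_on (U \<times> I) (\<lambda>(\<epsilon>, t). grad1 L (W \<epsilon> t))"
      using continuous_on_compose[OF cW continuous_on_subset[OF g1 WD']] by (simp add: o_def split_beta)
    have c2: "continuous_on (U \<times> I) (\<lambda>(\<epsilon>, t). grad2 L (W \<epsilon> t))"
      using continuous_on_compose[OF cW continuous_on_subset[OF g2 WD']] by (simp add: o_def split_beta)
    have c3: "continuous_on (U \<times> I) (\<lambda>(\<epsilon>, t). dS L (W \<epsilon> t))"
      using continuous_on_compose[OF cW continuous_on_subset[OF g3 WD']] by (simp add: o_def split_beta)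
    show ?thesis
      unfolding fx_def split_beta I_def
      using c1 c2 c3 unfolding split_beta I_def
      by (intro continuous_intros continuous_on_compose2[OF cdq] continuous_on_compose2[OF cdqd]
        continuous_on_compose2[OF cdS]) auto
  qed
  have dfx: "((\<lambda>\<epsilon>. L (W \<epsilon> t)) has_field_derivative fx \<epsilon> t) (at \<epsilon> within U)"
    if "\<epsilon> \<in> U" "t \<in> cbox 0 Tf" for \<epsilon> t
  proof -
    have t: "t \<in> I" using that I by simp
    have dW: "((\<lambda>\<epsilon>. W \<epsilon> t) has_derivative (\<lambda>h. (h *\<^sub>R dq t, h *\<^sub>R dqd t, h * dSv t))) (at \<epsilon> within U)"
      unfolding W_def by (intro derivative_eq_intros) auto
    have "((\<lambda>\<epsilon>. L (W \<epsilon> t)) has_derivative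
        (\<lambda>h. (\<lambda>(a, b, c). inner (grad1 L (W \<epsilon> t)) a + inner (grad2 L (W \<epsilon> t)) b + dS L (W \<epsilon> t) * c)
           (h *\<^sub>R dq t, h *\<^sub>R dqd t, h * dSv t))) (at \<epsilon> within U)"
      by (rule has_derivative_compose[OF dW has_derivative_state[OF Ld[OF WD[OF that(1) t]]]])
    then show ?thesis
      unfolding has_field_derivative_def fx_def
      by (rule has_derivative_eq_rhs) (auto simp: fun_eq_iff algebra_simps)
  qed
  have intg: "(\<lambda>t. L (W \<epsilon> t)) integrable_on cbox 0 Tf" if "\<epsilon> \<in> U" for \<epsilon>
  proof -
    have "continuous_on I (\<lambda>t. W \<epsilon> t)"
    proof -
      have "continuous_on I (Pair \<epsilon>)" by (intro continuous_intros)
      moreover have "Pair \<epsilon> ` I \<subseteq> U \<times> I" using that by auto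
      ultimately show ?thesis using continuous_on_compose2[OF cW, of I "\<lambda>t. (\<epsilon>, t)"] by simp
    qed
    then have "continuous_on I (\<lambda>t. L (W \<epsilon> t))"
      using continuous_on_compose2[OF Lc, of I "\<lambda>t. W \<epsilon> t"] WD that by blast
    then show ?thesis using I integrable_continuous by metis
  qed
  have "((\<lambda>\<epsilon>. integral (cbox 0 Tf) (\<lambda>t. L (W \<epsilon> t))) has_field_derivative integral (cbox 0 Tf) (fx 0)) (at 0 within U)"
    using leibniz_rule_field_derivative[of U 0 Tf "\<lambda>\<epsilon> t. L (W \<epsilon> t)" fx, OF dfx intg cfx[unfolded I] U0 cU] by simp
  then have "((\<lambda>\<epsilon>. integral (cbox 0 Tf) (\<lambda>t. L (W \<epsilon> t))) has_field_derivative integral (cbox 0 Tf) (fx 0)) (at 0)"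
    using at_within_open[OF U0 oU] by simp
  then show ?thesis unfolding W_def fx_def by (simp add: I[symmetric] I_def)
qed



lemma ftc_zero:
  fixes p h :: "real \<Rightarrow> real^'n::finite"
  assumes Tf: "0 \<le> Tf"
    and p: "\<And>t. t \<in> {0..Tf} \<Longrightarrow> (p has_vector_derivative pd t) (at t within {0..Tf})"
    and h: "\<And>t. t \<in> {0..Tf} \<Longrightarrow> (h has_vector_derivative hdv t) (at t within {0..Tf})"
    and h0: "h 0 = 0" "h Tf = 0"
  shows "((\<lambda>t. inner (pd t) (h t) + inner (p t) (hdv t)) has_integral 0) {0..Tf}"
proof -
  have "((\<lambda>t. inner (pd t) (h t) + inner (p t) (hdv t)) has_integral (inner (p Tf) (h Tf) - inner (p 0) (h 0))) {0..Tf}"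
  proof (rule fundamental_theorem_of_calculus[OF Tf])
    fix t assume t: "t \<in> {0..Tf}"
    have "((\<lambda>t. inner (p t) (h t)) has_derivative (\<lambda>x. inner (p t) (x *\<^sub>R hdv t) + inner (x *\<^sub>R pd t) (h t))) (at t within {0..Tf})"
      using p[OF t] h[OF t] unfolding has_vector_derivative_def
      by (rule bounded_bilinear.FDERIV[OF bounded_bilinear_inner])
    then show "((\<lambda>t. inner (p t) (h t)) has_vector_derivative inner (pd t) (h t) + inner (p t) (hdv t)) (at t within {0..Tf})"
      unfolding has_vector_derivative_def
      by (rule has_derivative_eq_rhs) (auto simp: fun_eq_iff algebra_simps)
  qed
  then show ?thesis using h0 by simp
qed

lemma Ck_minus: "goodset U \<Longrightarrow> Ck k U f \<Longrightarrow> Ck k U g \<Longrightarrow> Ck k U (\<lambda>x. f x - g x)"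
proof -
  assume u: "goodset U" and f: "Ck k U f" and g: "Ck k U g"
  have "Ck k U (\<lambda>x. f x + - g x)"
    by (intro Ck_add u f Ck_linear[OF u _ g] bounded_linear_minus[OF bounded_linear_ident])
  then show ?thesis by simp
qed

lemma vec_vd:
  fixes f :: "real \<Rightarrow> real^'n::finite"
  assumes "\<And>i. ((\<lambda>t. f t $ i) has_real_derivative f' $ i) (at t within s)"
  shows "(f has_vector_derivative f') (at t within s)"
  unfolding has_vector_derivative_def
proof (subst has_derivative_componentwise_within, intro ballI)
  fix b :: "real^'n" assume "b \<in> Basis"
  then obtain i where b: "b = axis i 1" by (auto simp: Basis_vec_def)
  have "((\<lambda>t. f t $ i) has_derivative (\<lambda>h. f' $ i * h)) (at t within s)"
    using assms[of i] unfolding has_field_derivative_def .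
  moreover have "(\<lambda>x. f x \<bullet> b) = (\<lambda>t. f t $ i)" "(\<lambda>x. x *\<^sub>R f' \<bullet> b) = (\<lambda>h. f' $ i * h)"
    unfolding b by (auto simp: inner_axis fun_eq_iff)
  ultimately show "((\<lambda>x. f x \<bullet> b) has_derivative (\<lambda>x. x *\<^sub>R f' \<bullet> b)) (at t within s)"
    by simp
qed

lemma linear_grads:
  fixes F :: "'n::finite state \<Rightarrow> real"
  assumes "bounded_linear F"
  shows "grad1 F z = (\<chi> i. F (axis i 1, 0, 0))" "grad2 F z = (\<chi> i. F (0, axis i 1, 0))" "dS F z = F (0, 0, 1)"
proof -
  have "frechet_derivative F (at z) = F"
    using frechet_derivative_at[OF bounded_linear_imp_has_derivative[OF assms]] by simp
  then show "grad1 F z = (\<chi> i. F (axis i 1, 0, 0))" "grad2 F z = (\<chi> i. F (0, axis i 1, 0))" "dS F z = F (0, 0, 1)"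
    by (auto simp: grad1_def grad2_def dS_def)
qed

lemma Sfun_grads:
  shows "grad1 Sfun z = 0" "grad2 Sfun z = 0" "dS Sfun z = 1"
proof -
  have "(Sfun has_derivative Sfun) (at z)"
    unfolding Sfun_def by (intro bounded_linear_imp_has_derivative bounded_linear_compose[OF bounded_linear_snd bounded_linear_snd])
  then have "(Sfun has_derivative (\<lambda>(a, b, c). inner (0::real^'a) a + inner (0::real^'a) b + 1 * c)) (at z)"
    by (rule has_derivative_eq_rhs) (auto simp: Sfun_def fun_eq_iff)
  from grads_from_derivative[OF this]
  show "grad1 Sfun z = 0" "grad2 Sfun z = 0" "dS Sfun z = 1" by auto
qed

lemma rhs_eq:
  fixes L :: "'n::finite state \<Rightarrow> real"
  assumes g1: "grad1 (Ham L V) z = - G1" and g2: "grad2 (Ham L V) z = v"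
    and g3: "dS (Ham L V) z = - c"
    and Fr: "Ffr_H L V Ffr z = Fr"
    and c: "c \<noteq> 0" and a: "inner Fr v \<noteq> 0"
  shows "poisson F (Ham L V) z + fourbr L V Ffr F (Ham L V) Sfun (Ham L V) z
     = inner (grad1 F z) v + inner (grad2 F z) (G1 + Fr) + dS F z * (inner Fr v / c)"
proof -
  have T: "Temp L V z = - c" using g3 by (simp add: Temp_def)
  have K: "Kfun L V Ffr z = - inner Fr v" using Fr g2 by (simp add: Kfun_def)
  show ?thesis
    unfolding poisson_def fourbr_def Let_def T K Fr g1 g2 g3 Sfun_grads
    using c a by (simp add: field_simps inner_add_right inner_commute)
qed



theorem mainTheorem1:
  fixes Q :: "(real^'n::finite) set"
    and L :: "'n state \<Rightarrow> real"
    and Ffr :: "'n state \<Rightarrow> real^'n"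
    and V :: "'n state \<Rightarrow> real^'n"
    and Tf :: real
    and q :: "real \<Rightarrow> real^'n"
    and S :: "real \<Rightarrow> real"
  assumes Q_open: "open Q"
    and L_smooth: "smooth_on (Q \<times> UNIV \<times> UNIV) L"
    and Ffr_smooth: "smooth_on (Q \<times> UNIV \<times> UNIV) Ffr"
    and V_smooth: "smooth_on (Q \<times> UNIV \<times> UNIV) V"
    and V_left: "\<And>x v s. x \<in> Q \<Longrightarrow> V (x, grad2 L (x, v, s), s) = v"
    and V_right: "\<And>x p s. x \<in> Q \<Longrightarrow> grad2 L (x, V (x, p, s), s) = p"
    and Tf_pos: "0 < Tf"
    and q_smooth: "smooth_on {0..Tf} q"
    and S_smooth: "smooth_on {0..Tf} S"
    and q_in_Q: "\<And>t. t \<in> {0..Tf} \<Longrightarrow> q t \<in> Q"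
    and T_nonzero: "\<And>t. t \<in> {0..Tf} \<Longrightarrow>
          Temp L V (q t, grad2 L (q t, vector_derivative q (at t within {0..Tf}), S t), S t) \<noteq> 0"
    and K_nonzero: "\<And>t. t \<in> {0..Tf} \<Longrightarrow>
          Kfun L V Ffr (q t, grad2 L (q t, vector_derivative q (at t within {0..Tf}), S t), S t) \<noteq> 0"
  shows "var_solution L Ffr Tf q S \<longleftrightarrow>
         metriplectic (Q \<times> UNIV \<times> UNIV) L V Ffr Tf q
           (\<lambda>t. grad2 L (q t, vector_derivative q (at t within {0..Tf}), S t)) S"
proof -
  define D where "D = Q \<times> (UNIV :: (real^'n) set) \<times> (UNIV :: real set)"
  have oD: "open D" unfolding D_def using Q_open by (intro open_Times) auto
  have gD: "goodset D" using goodset_open[OF oD] .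
  have gI: "goodset {0..Tf}" using goodset_Icc[OF Tf_pos] .
  define qd where "qd = (\<lambda>t. vector_derivative q (at t within {0..Tf}))"
  define Sd where "Sd = (\<lambda>t. vector_derivative S (at t within {0..Tf}))"
  define p where "p = (\<lambda>t. grad2 L (q t, qd t, S t))"
  have qd_eq: "\<And>t. vector_derivative q (at t within {0..Tf}) = qd t" by (simp add: qd_def)
  have Sd_eq: "\<And>t. vector_derivative S (at t within {0..Tf}) = Sd t" by (simp add: Sd_def)
  have p_eq: "\<And>t. grad2 L (q t, qd t, S t) = p t" by (simp add: p_def)
  have Lk: "\<And>k. Ck k D L" using L_smooth smooth_Ck D_def by blast
  have Fk: "\<And>k. Ck k D Ffr" using Ffr_smooth smooth_Ck D_def by blast
  have Vk: "\<And>k. Ck k D V" using V_smooth smooth_Ck D_def by blast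
  have qk: "\<And>k. Ck k {0..Tf} q" using q_smooth smooth_Ck by blast
  have Sk: "\<And>k. Ck k {0..Tf} S" using S_smooth smooth_Ck by blast
  have qdk: "\<And>k. Ck k {0..Tf} qd" unfolding qd_def using curve_vd(1)[OF Tf_pos qk] .
  have qvd: "\<And>t. t \<in> {0..Tf} \<Longrightarrow> (q has_vector_derivative qd t) (at t within {0..Tf})"
    unfolding qd_def using curve_vd(2)[OF Tf_pos qk] .
  have Sdk: "\<And>k. Ck k {0..Tf} Sd" unfolding Sd_def using curve_vd(1)[OF Tf_pos Sk] .
  have Svd: "\<And>t. t \<in> {0..Tf} \<Longrightarrow> (S has_vector_derivative Sd t) (at t within {0..Tf})"
    unfolding Sd_def using curve_vd(2)[OF Tf_pos Sk] .
  have wk: "\<And>k. Ck k {0..Tf} (\<lambda>t. (q t, qd t, S t))"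
    by (intro Ck_pair gI qk qdk Sk)
  have wD: "\<And>t. t \<in> {0..Tf} \<Longrightarrow> (q t, qd t, S t) \<in> D" using q_in_Q D_def by auto
  have zD: "\<And>t. t \<in> {0..Tf} \<Longrightarrow> (q t, p t, S t) \<in> D" using q_in_Q D_def by auto
  have Ld: "\<And>x. x \<in> D \<Longrightarrow> L differentiable (at x)"
    using Ck_diff[OF Lk] at_within_open[OF _ oD] by metis
  have Vd: "\<And>x. x \<in> D \<Longrightarrow> V differentiable (at x)"
    using Ck_diff[OF Vk] at_within_open[OF _ oD] by metis
  have Vz: "\<And>t. t \<in> {0..Tf} \<Longrightarrow> V (q t, p t, S t) = qd t"
    using V_left q_in_Q p_def by simp
  have Hg: "grad1 (Ham L V) (q t, p t, S t) = - grad1 L (q t, qd t, S t)"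
     "grad2 (Ham L V) (q t, p t, S t) = qd t"
     "dS (Ham L V) (q t, p t, S t) = - dS L (q t, qd t, S t)" if t: "t \<in> {0..Tf}" for t
  proof -
    have "V differentiable (at (q t, p t, S t))" using Vd zD t by blast
    moreover have "L differentiable (at (q t, V (q t, p t, S t), S t))" using Ld wD t Vz by simp
    moreover have "grad2 L (q t, V (q t, p t, S t), S t) = p t" using V_right q_in_Q t by blast
    ultimately show "grad1 (Ham L V) (q t, p t, S t) = - grad1 L (q t, qd t, S t)"
     "grad2 (Ham L V) (q t, p t, S t) = qd t"
     "dS (Ham L V) (q t, p t, S t) = - dS L (q t, qd t, S t)"
      using Ham_derivs[of V "q t" "p t" "S t" L] Vz[OF t] by auto
  qed
  have FrH: "\<And>t. t \<in> {0..Tf} \<Longrightarrow> Ffr_H L V Ffr (q t, p t, S t) = Ffr (q t, qd t, S t)"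
    using Hg by (simp add: Ffr_H_def)
  have c_nz: "\<And>t. t \<in> {0..Tf} \<Longrightarrow> dS L (q t, qd t, S t) \<noteq> 0"
    using T_nonzero Hg unfolding qd_eq p_eq by (simp add: Temp_def)
  have a_nz: "\<And>t. t \<in> {0..Tf} \<Longrightarrow> inner (Ffr (q t, qd t, S t)) (qd t) \<noteq> 0"
    using K_nonzero Hg FrH unfolding qd_eq p_eq by (simp add: Kfun_def)
  have RHS: "poisson F (Ham L V) (q t, p t, S t) + fourbr L V Ffr F (Ham L V) Sfun (Ham L V) (q t, p t, S t)
     = inner (grad1 F (q t, p t, S t)) (qd t)
       + inner (grad2 F (q t, p t, S t)) (grad1 L (q t, qd t, S t) + Ffr (q t, qd t, S t))
       + dS F (q t, p t, S t) * (inner (Ffr (q t, qd t, S t)) (qd t) / dS L (q t, qd t, S t))"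
    if t: "t \<in> {0..Tf}" for t F
    by (rule rhs_eq[OF Hg(1)[OF t] Hg(2)[OF t] Hg(3)[OF t] FrH[OF t] c_nz[OF t] a_nz[OF t]])
  have act: "((\<lambda>\<epsilon>. integral {0..Tf} (\<lambda>t. L (q t + \<epsilon> *\<^sub>R dq t,
                    qd t + \<epsilon> *\<^sub>R vector_derivative dq (at t within {0..Tf}),
                    S t + \<epsilon> * dSv t))) has_real_derivative
      integral {0..Tf} (\<lambda>t. inner (grad1 L (q t, qd t, S t)) (dq t) + inner (p t) (vector_derivative dq (at t within {0..Tf}))
        + dS L (q t, qd t, S t) * dSv t)) (at 0)"
    if dq: "smooth_on {0..Tf} dq" and dSv: "smooth_on {0..Tf} dSv" for dq dSv
  proof -
    have dqk: "\<And>k. Ck k {0..Tf} dq" using dq smooth_Ck by blast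
    have "continuous_on {0..Tf} (\<lambda>t. vector_derivative dq (at t within {0..Tf}))"
      using Ck_cont[OF curve_vd(1)[OF Tf_pos dqk[of "Suc 0"]]] .
    moreover have "continuous_on {0..Tf} dSv" using dSv smooth_Ck Ck_cont by blast
    ultimately show ?thesis
      using action_deriv[OF Q_open Tf_pos Lk[unfolded D_def] Ck_cont[OF qk] Ck_cont[OF qdk] Ck_cont[OF Sk]
          Ck_cont[OF dqk]] q_in_Q
      unfolding p_eq by blast
  qed
  show ?thesis
    unfolding var_solution_def metriplectic_def Let_def qd_eq Sd_eq p_eq D_def[symmetric]
  proof (rule iffI; (elim conjE)?)
    assume met: "\<forall>F. smooth_on D F \<longrightarrow>
      (\<forall>t\<in>{0..Tf}. ((\<lambda>t. F (q t, p t, S t)) has_real_derivative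
        poisson F (Ham L V) (q t, p t, S t) + fourbr L V Ffr F (Ham L V) Sfun (Ham L V) (q t, p t, S t)) (at t within {0..Tf}))"
    have pvd: "(p has_vector_derivative (grad1 L (q t, qd t, S t) + Ffr (q t, qd t, S t))) (at t within {0..Tf})"
      if t: "t \<in> {0..Tf}" for t
    proof (rule vec_vd)
      fix i
      define F where "F = (\<lambda>z::'n state. inner z (0, axis i 1, 0))"
      have blF: "bounded_linear F" unfolding F_def by (rule bounded_linear_inner_left)
      have "Ck k D F" for k using Ck_linear[OF gD blF Ck_id[OF gD]] by simp
      then have Fs: "smooth_on D F" by (rule Ck_smooth)
      have g1: "grad1 F z = 0" and g2: "grad2 F z = axis i 1" and g3: "dS F z = 0" for z
      proof -
        have "(\<chi> j. F (0, axis j 1, 0)) = axis i 1"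
          unfolding F_def by (simp add: vec_eq_iff inner_axis')
        then show "grad1 F z = 0" "grad2 F z = axis i 1" "dS F z = 0"
          using linear_grads[OF blF, of z] by (auto simp: F_def vec_eq_iff)
      qed
      have "((\<lambda>t. F (q t, p t, S t)) has_real_derivative
        poisson F (Ham L V) (q t, p t, S t) + fourbr L V Ffr F (Ham L V) Sfun (Ham L V) (q t, p t, S t)) (at t within {0..Tf})"
        using met Fs t by blast
      then show "((\<lambda>t. p t $ i) has_real_derivative (grad1 L (q t, qd t, S t) + Ffr (q t, qd t, S t)) $ i) (at t within {0..Tf})"
        unfolding RHS[OF t] g1 g2 g3 by (simp add: F_def inner_axis inner_axis')
    qed
    have Seq: "dS L (q t, qd t, S t) * Sd t = inner (Ffr (q t, qd t, S t)) (qd t)" if t: "t \<in> {0..Tf}" for t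
    proof -
      have blS: "bounded_linear (Sfun :: 'n state \<Rightarrow> real)"
        unfolding Sfun_def by (intro bounded_linear_compose[OF bounded_linear_snd bounded_linear_snd])
      have "Ck k D Sfun" for k using Ck_linear[OF gD blS Ck_id[OF gD]] by simp
      then have Fs: "smooth_on D Sfun" by (rule Ck_smooth)
      have "((\<lambda>t. Sfun (q t, p t, S t)) has_real_derivative
        poisson Sfun (Ham L V) (q t, p t, S t) + fourbr L V Ffr Sfun (Ham L V) Sfun (Ham L V) (q t, p t, S t)) (at t within {0..Tf})"
        using met Fs t by blast
      then have "(S has_real_derivative inner (Ffr (q t, qd t, S t)) (qd t) / dS L (q t, qd t, S t)) (at t within {0..Tf})"
        unfolding RHS[OF t] Sfun_grads by (simp add: Sfun_def)
      then have "Sd t = inner (Ffr (q t, qd t, S t)) (qd t) / dS L (q t, qd t, S t)"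
        unfolding Sd_def has_real_derivative_iff_has_vector_derivative
        using vector_derivative_within_closed_interval[OF Tf_pos t] by blast
      then show ?thesis using c_nz[OF t] by simp
    qed
    show "(\<forall>dq dSv. smooth_on {0..Tf} dq \<and> smooth_on {0..Tf} dSv \<and> dq 0 = 0 \<and> dq Tf = 0 \<and>
            (\<forall>t\<in>{0..Tf}. dS L (q t, qd t, S t) * dSv t = inner (Ffr (q t, qd t, S t)) (dq t))
          \<longrightarrow> ((\<lambda>\<epsilon>. integral {0..Tf} (\<lambda>t. L (q t + \<epsilon> *\<^sub>R dq t,
                    qd t + \<epsilon> *\<^sub>R vector_derivative dq (at t within {0..Tf}),
                    S t + \<epsilon> * dSv t))) has_real_derivative 0) (at 0))
       \<and> (\<forall>t\<in>{0..Tf}. dS L (q t, qd t, S t) * Sd t = inner (Ffr (q t, qd t, S t)) (qd t))"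
    proof (intro conjI allI impI ballI Seq, elim conjE)
      fix dq dSv assume dq: "smooth_on {0..Tf} dq" and dSv: "smooth_on {0..Tf} (dSv :: real \<Rightarrow> real)"
        and dq0: "dq 0 = 0" "dq Tf = 0"
        and con: "\<forall>t\<in>{0..Tf}. dS L (q t, qd t, S t) * dSv t = inner (Ffr (q t, qd t, S t)) (dq t)"
      have dqk: "\<And>k. Ck k {0..Tf} dq" using dq smooth_Ck by blast
      have ftc: "((\<lambda>t. inner (grad1 L (q t, qd t, S t) + Ffr (q t, qd t, S t)) (dq t)
          + inner (p t) (vector_derivative dq (at t within {0..Tf}))) has_integral 0) {0..Tf}"
        using ftc_zero[OF less_imp_le[OF Tf_pos] pvd curve_vd(2)[OF Tf_pos dqk] dq0] by blast
      have "integral {0..Tf} (\<lambda>t. inner (grad1 L (q t, qd t, S t)) (dq t) + inner (p t) (vector_derivative dq (at t within {0..Tf}))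
        + dS L (q t, qd t, S t) * dSv t) = integral {0..Tf} (\<lambda>t. inner (grad1 L (q t, qd t, S t) + Ffr (q t, qd t, S t)) (dq t)
          + inner (p t) (vector_derivative dq (at t within {0..Tf})))"
        by (rule integral_cong) (use con in \<open>auto simp: inner_add_left\<close>)
      also have "\<dots> = 0" using ftc by (rule integral_unique)
      finally show "((\<lambda>\<epsilon>. integral {0..Tf} (\<lambda>t. L (q t + \<epsilon> *\<^sub>R dq t,
                    qd t + \<epsilon> *\<^sub>R vector_derivative dq (at t within {0..Tf}),
                    S t + \<epsilon> * dSv t))) has_real_derivative 0) (at 0)"
        using act[OF dq dSv] by simp
    qed
  next
    assume var: "(\<forall>dq dSv. smooth_on {0..Tf} dq \<and> smooth_on {0..Tf} dSv \<and> dq 0 = 0 \<and> dq Tf = 0 \<and>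
            (\<forall>t\<in>{0..Tf}. dS L (q t, qd t, S t) * dSv t = inner (Ffr (q t, qd t, S t)) (dq t))
          \<longrightarrow> ((\<lambda>\<epsilon>. integral {0..Tf} (\<lambda>t. L (q t + \<epsilon> *\<^sub>R dq t,
                    qd t + \<epsilon> *\<^sub>R vector_derivative dq (at t within {0..Tf}),
                    S t + \<epsilon> * dSv t))) has_real_derivative 0) (at 0))"
      and Seq: "\<forall>t\<in>{0..Tf}. dS L (q t, qd t, S t) * Sd t = inner (Ffr (q t, qd t, S t)) (qd t)"
    show "\<forall>F. smooth_on D F \<longrightarrow>
      (\<forall>t\<in>{0..Tf}. ((\<lambda>t. F (q t, p t, S t)) has_real_derivative
        poisson F (Ham L V) (q t, p t, S t) + fourbr L V Ffr F (Ham L V) Sfun (Ham L V) (q t, p t, S t)) (at t within {0..Tf}))"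
    proof -
      have c_comp: "\<And>k. Ck k {0..Tf} (\<lambda>t. dS L (q t, qd t, S t))"
        using Ck_comp[OF oD gI Ck_dS[OF oD Lk] wk wD] .
      have g1_comp: "\<And>k. Ck k {0..Tf} (\<lambda>t. grad1 L (q t, qd t, S t))"
        using Ck_comp[OF oD gI Ck_grad1[OF oD Lk] wk wD] .
      have F_comp: "\<And>k. Ck k {0..Tf} (\<lambda>t. Ffr (q t, qd t, S t))"
        using Ck_comp[OF oD gI Fk wk wD] .
      have pk: "\<And>k. Ck k {0..Tf} p"
        unfolding p_def using Ck_comp[OF oD gI Ck_grad2[OF oD Lk] wk wD] .
      define pd where "pd = (\<lambda>t. vector_derivative p (at t within {0..Tf}))"
      have pdk: "\<And>k. Ck k {0..Tf} pd" unfolding pd_def using curve_vd(1)[OF Tf_pos pk] .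
      have pvd: "\<And>t. t \<in> {0..Tf} \<Longrightarrow> (p has_vector_derivative pd t) (at t within {0..Tf})"
        unfolding pd_def using curve_vd(2)[OF Tf_pos pk] .
      define g where "g = (\<lambda>t. grad1 L (q t, qd t, S t) + Ffr (q t, qd t, S t) - pd t)"
      have gk: "\<And>k. Ck k {0..Tf} g" unfolding g_def
        by (intro Ck_minus Ck_add gI g1_comp F_comp pdk)
      define dq where "dq = (\<lambda>t. (t * (Tf - t)) *\<^sub>R g t)"
      have dqk: "\<And>k. Ck k {0..Tf} dq" unfolding dq_def
        by (intro Ck_scaleR Ck_mult Ck_minus Ck_const Ck_id gI gk)
      define dSv where "dSv = (\<lambda>t. inner (Ffr (q t, qd t, S t)) (dq t) * inverse (dS L (q t, qd t, S t)))"
      have dSk: "\<And>k. Ck k {0..Tf} dSv" unfolding dSv_def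
        by (intro Ck_mult Ck_inner Ck_inverse gI F_comp dqk c_comp c_nz)
      have dq_s: "smooth_on {0..Tf} dq" using dqk Ck_smooth by blast
      have dS_s: "smooth_on {0..Tf} dSv" using dSk Ck_smooth by blast
      have con: "\<forall>t\<in>{0..Tf}. dS L (q t, qd t, S t) * dSv t = inner (Ffr (q t, qd t, S t)) (dq t)"
        using c_nz by (simp add: dSv_def)
      have D0: "((\<lambda>\<epsilon>. integral {0..Tf} (\<lambda>t. L (q t + \<epsilon> *\<^sub>R dq t,
                    qd t + \<epsilon> *\<^sub>R vector_derivative dq (at t within {0..Tf}),
                    S t + \<epsilon> * dSv t))) has_real_derivative 0) (at 0)"
      proof -
        have dq0: "dq 0 = 0" "dq Tf = 0" by (simp_all add: dq_def)
        show ?thesis using var dq_s dS_s con dq0 by blast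
      qed
      have A0: "integral {0..Tf} (\<lambda>t. inner (grad1 L (q t, qd t, S t)) (dq t) + inner (p t) (vector_derivative dq (at t within {0..Tf}))
        + dS L (q t, qd t, S t) * dSv t) = 0"
        using DERIV_unique[OF act[OF dq_s dS_s] D0] .
      have ftc: "((\<lambda>t. inner (pd t) (dq t) + inner (p t) (vector_derivative dq (at t within {0..Tf}))) has_integral 0) {0..Tf}"
        using ftc_zero[OF less_imp_le[OF Tf_pos] pvd curve_vd(2)[OF Tf_pos dqk]] by (simp add: dq_def)
      have cgdq: "continuous_on {0..Tf} (\<lambda>t. inner (g t) (dq t))"
        using Ck_cont[OF Ck_inner[OF gI gk dqk]] .
      have "((\<lambda>t. (inner (pd t) (dq t) + inner (p t) (vector_derivative dq (at t within {0..Tf}))) + inner (g t) (dq t))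
          has_integral (0 + integral {0..Tf} (\<lambda>t. inner (g t) (dq t)))) {0..Tf}"
        using has_integral_add[OF ftc integrable_integral[OF integrable_continuous_interval[OF cgdq]]] .
      then have X: "((\<lambda>t. (inner (pd t) (dq t) + inner (p t) (vector_derivative dq (at t within {0..Tf}))) + inner (g t) (dq t))
          has_integral (integral {0..Tf} (\<lambda>t. inner (g t) (dq t)))) {0..Tf}" by (simp only: add_0_left)
      have "((\<lambda>t. inner (grad1 L (q t, qd t, S t)) (dq t) + inner (p t) (vector_derivative dq (at t within {0..Tf}))
        + dS L (q t, qd t, S t) * dSv t) has_integral integral {0..Tf} (\<lambda>t. inner (g t) (dq t))) {0..Tf}"
      proof (rule has_integral_cong[THEN iffD1, OF _ X])
        fix x assume x: "x \<in> {0..Tf}"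
        have cx: "dS L (q x, qd x, S x) * dSv x = inner (Ffr (q x, qd x, S x)) (dq x)" using con x by blast
        show "inner (pd x) (dq x) + inner (p x) (vector_derivative dq (at x within {0..Tf})) + inner (g x) (dq x) =
          inner (grad1 L (q x, qd x, S x)) (dq x) + inner (p x) (vector_derivative dq (at x within {0..Tf}))
          + dS L (q x, qd x, S x) * dSv x"
          unfolding cx g_def inner_add_left inner_diff_left by simp
      qed
      then have "integral {0..Tf} (\<lambda>t. inner (grad1 L (q t, qd t, S t)) (dq t) + inner (p t) (vector_derivative dq (at t within {0..Tf}))
        + dS L (q t, qd t, S t) * dSv t) = integral {0..Tf} (\<lambda>t. inner (g t) (dq t))"
        by (rule integral_unique)
      then have int0: "integral {0..Tf} (\<lambda>t. inner (g t) (dq t)) = 0"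
        using A0 by linarith
      have h0: "((\<lambda>t. inner (g t) (dq t)) has_integral 0) (cbox 0 Tf)"
        using integrable_integral[OF integrable_continuous_interval[OF cgdq]] int0 by simp
      have hz: "inner (g t) (dq t) = 0" if t: "t \<in> {0..Tf}" for t
      proof (rule has_integral_0_cbox_imp_0[OF _ _ h0])
        show "continuous_on (cbox 0 Tf) (\<lambda>t. inner (g t) (dq t))" using cgdq by simp
        show "\<And>x. x \<in> box 0 Tf \<Longrightarrow> 0 \<le> inner (g x) (dq x)"
          by (auto simp: dq_def box_real)
        show "box 0 Tf \<noteq> {}" using Tf_pos by (simp add: box_real)
        show "t \<in> cbox 0 Tf" using t by simp
      qed
      have gz_open: "g t = 0" if t: "t \<in> {0<..<Tf}" for t
      proof -
        have "(t * (Tf - t)) * inner (g t) (g t) = 0" using hz[of t] t by (simp add: dq_def)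
        moreover have "t * (Tf - t) > 0" using t by simp
        ultimately show ?thesis using t by auto
      qed
      have gz: "g t = 0" if t: "t \<in> {0..Tf}" for t
        using continuous_constant_on_closure[of "{0<..<Tf}" g 0 t] Ck_cont[OF gk] gz_open t Tf_pos by simp
      have EL: "pd t = grad1 L (q t, qd t, S t) + Ffr (q t, qd t, S t)" if t: "t \<in> {0..Tf}" for t
        using gz[OF t] by (simp add: g_def)
      show ?thesis
      proof (intro allI impI ballI)
        fix F :: "'n state \<Rightarrow> real" and t assume Fs: "smooth_on D F" and t: "t \<in> {0..Tf}"
        have Fd: "F differentiable (at (q t, p t, S t))"
          using Ck_diff[OF smooth_Ck[OF Fs] zD[OF t]] at_within_open[OF zD[OF t] oD] by metis
        have zvd: "((\<lambda>t. (q t, p t, S t)) has_vector_derivative (qd t, pd t, Sd t)) (at t within {0..Tf})"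
          by (intro has_vector_derivative_Pair qvd pvd Svd t)
        have "((\<lambda>t. F (q t, p t, S t)) has_derivative
          (\<lambda>h. (\<lambda>(a, b, c). inner (grad1 F (q t, p t, S t)) a + inner (grad2 F (q t, p t, S t)) b + dS F (q t, p t, S t) * c)
            (h *\<^sub>R (qd t, pd t, Sd t)))) (at t within {0..Tf})"
          using has_derivative_compose[OF zvd[unfolded has_vector_derivative_def] has_derivative_state[OF Fd]] .
        then have "((\<lambda>t. F (q t, p t, S t)) has_real_derivative
          inner (grad1 F (q t, p t, S t)) (qd t) + inner (grad2 F (q t, p t, S t)) (pd t) + dS F (q t, p t, S t) * Sd t) (at t within {0..Tf})"
          unfolding has_field_derivative_def
          by (rule has_derivative_eq_rhs) (auto simp: fun_eq_iff algebra_simps)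
        moreover have "Sd t = inner (Ffr (q t, qd t, S t)) (qd t) / dS L (q t, qd t, S t)"
          using Seq t c_nz[OF t] by (simp add: field_simps)
        ultimately show "((\<lambda>t. F (q t, p t, S t)) has_real_derivative
          poisson F (Ham L V) (q t, p t, S t) + fourbr L V Ffr F (Ham L V) Sfun (Ham L V) (q t, p t, S t)) (at t within {0..Tf})"
          unfolding RHS[OF t] EL[OF t] by simp
      qed
    qed
  qed
qed

end
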